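(* Assume $f(0)>\frac34$. There exist $U<0$ and constants $0<c\le C$ such that the following holds for every $u_0<U$, every $s\in[0,1]$ and every smooth function $\phi$ on $\overline{\Omega_{u_0}}$ (up to $R=0$): $$c\,I_s(\phi)\le\mathcal E_{\mathcal H_{s,u_0}}(\phi)\le C\,I_s(\phi),$$ where $$I_s(\phi)=\int_{]-\infty,u_0[\times S^2}\Big(u^2(\partial_u\phi)^2+\frac{R}{|u|}(\partial_R\phi)^2+|\nabla_{S^2}\phi|^2\Big)du\,d^2\omega,$$ the integrand being evaluated on $\mathcal H_{s,u_0}$.
   Context: Let $a>0$ and let $f$ be an analytic positive function on $[0,a)$. On a manifold with coordinates $(u,R,\omega)\in\mathbb R\times[0,a)\times S^2$ consider $$\hat g=R^2f(R)\,du^2-2\,du\,dR-d\omega^2,$$ with future null infinity $\mathscr I^+=\{R=0\}$ and the time orientation in which $\partial_u$ is future-directed on $\mathscr I^+$. Put $r=1/R$, fix $r_*$ with $\frac{dr_*}{dr}=\frac1{f(1/r)}$, and set $t=u+r_*$. Regions, for $u_0<0$: - $\Omega_{u_0}=\{t\ge0\}\cap\{u<u_0\}$; - for $0<s\le1$, $\mathcal H_{s,u_0}=\{u=-sr_*\}\cap\{u<u_0\}$; - $\mathcal H_{0,u_0}=\{R=0,\ u<u_0\}$. Each $\mathcal H_{s,u_0}$ is parametrised by $(u,\omega)$. $d^2\omega$ and $\nabla_{S^2}$ are the area form and gradient of the unit sphere. Energy flux. Let $T_{ab}(\phi)=\hat\nabla_a\phi\hat\nabla_b\phi-\frac12\hat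 g^{cd}\hat\nabla_c\phi\hat\nabla_d\phi\,\hat g_{ab}$ and $K=u^2\partial_u-2(1+uR)\partial_R$. The flux $\mathcal E_\Sigma(\phi)=\int_\Sigma K^bT_{ab}(\phi)\tilde n^a\,d\mu$ uses: - a future-directed normal $\tilde n$ to $\Sigma$; - a transverse $\tilde l$ with $\hat g(\tilde l,\tilde n)=1$; - the positive measure $d\mu$ induced by $\tilde l\lrcorner(du\wedge dR\wedge d^2\omega)$. Explicitly, for $0<s\le1$, the integrand being evaluated on $\mathcal H_{s,u_0}$: $$\mathcal E_{\mathcal H_{s,u_0}}(\phi)=\int_{]-\infty,u_0[\times S^2}\Big(R^2u^2f(R)\,\partial_u\phi\,\partial_R\phi+u^2(\partial_u\phi)^2$$ $$+\Big(\frac{R^4u^2f(R)^2}{2s}+R^3f(R)(2-s)\frac us+\frac{R^2f(R)(2-s)}{s}\Big)(\partial_R\phi)^2$$ $$+\Big(\frac{R^2u^2f(R)}{2s}+Ru+1\Big)|\nabla_{S^2}\phi|^2\Big)du\,d^2\omega.$$ For $s=0$: $$\mathcal E_{\mathcal H_{0,u_0}}(\phi)=\int_{]-\infty,u_0[\times S^2}\big(u^2(\partial_u\phi)^2+|\nabla_{S^2}\phi|^2\big)du\,d^2\omega.$$ *)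

theory Defs
  imports "HOL-Analysis.Analysis"
begin

definition real_analytic_on :: "real set \<Rightarrow> (real \<Rightarrow> real) \<Rightarrow> bool" where
  "real_analytic_on A g \<longleftrightarrow>
     (\<forall>x\<in>A. \<exists>\<delta>>0. \<exists>c::nat \<Rightarrow> real.
        \<forall>y\<in>A. \<bar>y - x\<bar> < \<delta> \<longrightarrow> (\<lambda>n. c n * (y - x) ^ n) sums g y)"

text \<open>C-infinity on an open set S of a euclidean space: differentiable, and all
  partial derivatives are again C-infinity (coinductively, so all iterated
  partial derivatives exist).\<close>
coinductive smooth_on :: "'a::euclidean_space set \<Rightarrow> ('a \<Rightarrow> real) \<Rightarrow> bool" for S where
  "\<lbrakk>\<forall>x\<in>S. g differentiable (at x);
    \<forall>b\<in>Basis. smooth_on S (\<lambda>x. frechet_derivative g (at x) b)\<rbrakk> \<Longrightarrow> smooth_on S g"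

text \<open>Points are (u, R, x) with x in R^3; the sphere S^2 is the unit sphere.\<close>
type_synonym point = "real \<times> real \<times> (real^3)"

definition sph :: "real \<Rightarrow> real \<Rightarrow> real^3" where
  "sph \<theta> \<psi> = vector [sin \<theta> * cos \<psi>, sin \<theta> * sin \<psi>, cos \<theta>]"

text \<open>Closure of Omega_{u0} (within the manifold R x [0,a) x S^2),
  including the piece R = 0 of future null infinity.\<close>
definition Omega_closure :: "real \<Rightarrow> (real \<Rightarrow> real) \<Rightarrow> real \<Rightarrow> point set" where
  "Omega_closure a rs u0 =
     {(u, R, x). x \<in> sphere 0 1 \<and> u \<le> u0 \<and> 0 \<le> R \<and> R < a \<and>
                 (R = 0 \<or> u + rs (1 / R) \<ge> 0)}"

text \<open>The R-coordinate of the point of H_{s,u0} above a given u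
  (H_s = {u = - s r_*}, r = 1/R; H_0 = {R = 0}).\<close>
definition R_on_H :: "real \<Rightarrow> (real \<Rightarrow> real) \<Rightarrow> real \<Rightarrow> real \<Rightarrow> real" where
  "R_on_H a rs s u =
     (if s = 0 then 0 else (THE R. 0 < R \<and> R < a \<and> u = - s * rs (1 / R)))"

definition d_u :: "(point \<Rightarrow> real) \<Rightarrow> real \<Rightarrow> real \<Rightarrow> real^3 \<Rightarrow> real" where
  "d_u \<phi> u R x = deriv (\<lambda>v. \<phi> (v, R, x)) u"

definition d_R :: "(point \<Rightarrow> real) \<Rightarrow> real \<Rightarrow> real \<Rightarrow> real^3 \<Rightarrow> real" where
  "d_R \<phi> u R x = deriv (\<lambda>v. \<phi> (u, v, x)) R"

definition grad_S2_sq :: "(point \<Rightarrow> real) \<Rightarrow> real \<Rightarrow> real \<Rightarrow> real \<Rightarrow> real \<Rightarrow> real" where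
  "grad_S2_sq \<phi> u R \<theta> \<psi> =
     (deriv (\<lambda>t. \<phi> (u, R, sph t \<psi>)) \<theta>)\<^sup>2
     + (deriv (\<lambda>p. \<phi> (u, R, sph \<theta> p)) \<psi>)\<^sup>2 / (sin \<theta>)\<^sup>2"

text \<open>Energy density (integrand of E_{H_{s,u0}}) at parameters s, u, R, with
  a = d_u phi, b = d_R phi, g = |grad_S2 phi|^2.\<close>
definition energy_density ::
  "(real \<Rightarrow> real) \<Rightarrow> real \<Rightarrow> real \<Rightarrow> real \<Rightarrow> real \<Rightarrow> real \<Rightarrow> real \<Rightarrow> real" where
  "energy_density f s u R a b g =
     (if s = 0 then u\<^sup>2 * a\<^sup>2 + g
      else R\<^sup>2 * u\<^sup>2 * f R * a * b + u\<^sup>2 * a\<^sup>2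
         + (R ^ 4 * u\<^sup>2 * (f R)\<^sup>2 / (2 * s) + R ^ 3 * f R * (2 - s) * u / s
            + R\<^sup>2 * f R * (2 - s) / s) * b\<^sup>2
         + (R\<^sup>2 * u\<^sup>2 * f R / (2 * s) + R * u + 1) * g)"

definition E_integrand ::
  "real \<Rightarrow> (real \<Rightarrow> real) \<Rightarrow> (real \<Rightarrow> real) \<Rightarrow> real \<Rightarrow> (point \<Rightarrow> real)
     \<Rightarrow> real \<times> real \<times> real \<Rightarrow> real" where
  "E_integrand a f rs s \<phi> = (\<lambda>(u, \<theta>, \<psi>).
     (let R = R_on_H a rs s u; x = sph \<theta> \<psi> in
      energy_density f s u R (d_u \<phi> u R x) (d_R \<phi> u R x) (grad_S2_sq \<phi> u R \<theta> \<psi>))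
     * sin \<theta>)"

definition I_integrand ::
  "real \<Rightarrow> (real \<Rightarrow> real) \<Rightarrow> real \<Rightarrow> (point \<Rightarrow> real) \<Rightarrow> real \<times> real \<times> real \<Rightarrow> real" where
  "I_integrand a rs s \<phi> = (\<lambda>(u, \<theta>, \<psi>).
     (let R = R_on_H a rs s u; x = sph \<theta> \<psi> in
      u\<^sup>2 * (d_u \<phi> u R x)\<^sup>2 + R / \<bar>u\<bar> * (d_R \<phi> u R x)\<^sup>2 + grad_S2_sq \<phi> u R \<theta> \<psi>)
     * sin \<theta>)"

definition param_dom :: "real \<Rightarrow> (real \<times> real \<times> real) set" where
  "param_dom u0 = {..<u0} \<times> {0<..<pi} \<times> {0<..<2 * pi}"

definition ext_integral :: "(real \<times> real \<times> real) set \<Rightarrow> (real \<times> real \<times> real \<Rightarrow> real) \<Rightarrow> ereal" where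
  "ext_integral D h =
     enn2ereal (\<integral>\<^sup>+ p \<in> D. ennreal (h p) \<partial>lborel)
     - enn2ereal (\<integral>\<^sup>+ p \<in> D. ennreal (- h p) \<partial>lborel)"

definition energy_flux :: "real \<Rightarrow> (real \<Rightarrow> real) \<Rightarrow> (real \<Rightarrow> real) \<Rightarrow> real \<Rightarrow> real
     \<Rightarrow> (point \<Rightarrow> real) \<Rightarrow> ereal" where
  "energy_flux a f rs s u0 \<phi> = ext_integral (param_dom u0) (E_integrand a f rs s \<phi>)"

definition I_norm :: "real \<Rightarrow> (real \<Rightarrow> real) \<Rightarrow> real \<Rightarrow> real \<Rightarrow> (point \<Rightarrow> real) \<Rightarrow> ereal" where
  "I_norm a rs s u0 \<phi> = enn2ereal (\<integral>\<^sup>+ p \<in> param_dom u0. ennreal (I_integrand a rs s \<phi> p) \<partial>lborel)"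

end

theory Submission
  imports Defs
begin

lemma nn_cmult_le:
  fixes c :: ennreal
  shows "c * integral\<^sup>N M f \<le> (\<integral>\<^sup>+ x. c * f x \<partial>M)"
  unfolding nn_integral_def SUP_mult_left_ennreal
proof (rule SUP_least)
  fix g assume g: "g \<in> {g. simple_function M g \<and> g \<le> f}"
  then have sg: "simple_function M g" and gf: "g \<le> f" by auto
  have "c * integral\<^sup>S M g = integral\<^sup>S M (\<lambda>x. c * g x)"
    using sg by simp
  also have "\<dots> \<le> (SUP h \<in> {h. simple_function M h \<and> h \<le> (\<lambda>x. c * f x)}. integral\<^sup>S M h)"
    apply (rule SUP_upper)
    using sg gf by (auto simp: le_fun_def intro: simple_function_compose1 mult_left_mono)
  finally show "c * integral\<^sup>S M g \<le> (SUP h \<in> {h. simple_function M h \<and> h \<le> (\<lambda>x. c * f x)}. integral\<^sup>S M h)" .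
qed

lemma lin_aux: fixes D W w F :: real
  shows "D \<ge> W/4+w/4+1/4 \<Longrightarrow> W \<ge> 0 \<Longrightarrow> w \<le> 1 \<Longrightarrow> F \<ge> 3/4 \<Longrightarrow> 0 \<le> 1/2 - 3*w/2+F+D"
  by linarith

lemma lin4: fixes A B C D F :: real
  shows "A \<le> 1*4 \<Longrightarrow> 0 \<le> B \<Longrightarrow> C \<le> (F+1)*2 \<Longrightarrow> D \<le> 1*4 \<Longrightarrow> D/2 - B + C + A/4 \<le> 2*F+5"
  by (simp add: algebra_simps)

lemma lin5: fixes F X Y :: real
  shows "(6*F+14)*(3/8) \<le> X \<Longrightarrow> Y \<le> 2*F+5 \<Longrightarrow> F > 3/4 \<Longrightarrow> Y \<le> X"
  by (simp add: algebra_simps)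

lemma h0_bound:
  fixes w F d m :: real
  assumes "0 \<le> w" "w \<le> 1" "d \<ge> 1/4" "F \<ge> 3/4"
  shows "3*w^2/2 - 2*w + F*(2-w) - d*w^3 \<ge> F - 1/2 - d"
proof -
  have B: "-3/2*(w+1) + 2 + F + d*(w^2+w+1) \<ge> 0"
  proof -
    have "d*(w^2+w+1) \<ge> (1/4)*(w^2+w+1)"
      using assms by (intro mult_right_mono) (auto intro: add_nonneg_nonneg)
    moreover have "w^2 \<ge> 0" by simp
    ultimately show ?thesis using assms lin_aux[of "w^2" w "d*(w^2+w+1)" F] by (simp add: algebra_simps)
  qed
  have "3*w^2/2 - 2*w + F*(2-w) - d*w^3 - (F - 1/2 - d) = (1-w)*(-3/2*(w+1) + 2 + F + d*(w^2+w+1))"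
    unfolding power2_eq_square power3_eq_cube by (simp add: field_simps)
  moreover have "(1-w)*(-3/2*(w+1) + 2 + F + d*(w^2+w+1)) \<ge> 0"
    using B assms by simp
  ultimately show ?thesis by linarith
qed

lemma alg_main:
  fixes w t p F X Z g m e :: real
  assumes F: "F > 3/4" and m: "m = min (F - 3/4) 1" and e: "e = m/20"
    and w: "0 < w" "w \<le> 1" and t: "\<bar>t - 1\<bar> \<le> e" and p: "\<bar>p - F\<bar> \<le> e" and g: "g \<ge> 0"
  defines "E \<equiv> w*X^2 - w^2*t*X*Z + (w^2*t^2/2 - w*t*(2-w) + p*(2-w))*Z^2
               + w*(w*t^2/(2*p) - w*t/p + 1)*g"
    and "I \<equiv> w*X^2 + (p/t)*Z^2 + w*g"
  shows "(m/(8*(F+1))) * I \<le> E \<and> E \<le> (6*F+14) * I"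
proof -
  have m0: "m > 0" "m \<le> 1" "m \<le> F - 3/4" using m F by auto
  have e0: "e > 0" "e \<le> 1/20" "e \<le> m/20" using m0 e by auto
  have t1: "1 - e \<le> t" "t \<le> 1 + e" using t by auto
  have t4: "t^2 \<le> 4"
  proof -
    have "t \<le> 2" "0 \<le> t" using t1 e0 by auto
    hence "t^2 \<le> 2^2" by (intro power_mono) auto
    thus ?thesis by simp
  qed
  have t20: "t^2 \<ge> 0" by simp
  have p1: "F - e \<le> p" "p \<le> F + e" using p by auto
  have tpos: "t > 0" and ppos: "p > 0" using t1 p1 e0 F by auto
  define d where "d = 1/4 + m/8"
  define \<delta> where "\<delta> = 2/(2+m)"
  have dd: "d = 1/(4*\<delta>)" unfolding d_def \<delta>_def using m0 by (simp add: field_simps)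
  have \<delta>0: "\<delta> > 0" "1 - \<delta> = m/(2+m)" unfolding \<delta>_def using m0 by (auto simp: field_simps)
  define h0 where "h0 = 3*w^2/2 - 2*w + F*(2-w) - d*w^3"
  have "h0 \<ge> F - 1/2 - d"
    unfolding h0_def by (rule h0_bound) (use w m0 F in \<open>auto simp: d_def\<close>)
  hence h0b: "h0 \<ge> 7*m/8" using m0 unfolding d_def by linarith
  define Q where "Q = w^2*t^2/2 - w*t*(2-w) + p*(2-w)"
  define h where "h = Q - d*w^3*t^2"
  have hdiff: "h - h0 = w^2*(t^2-1)/2 - w*(2-w)*(t-1) + (p-F)*(2-w) - d*w^3*(t^2-1)"
    unfolding h_def h0_def Q_def by (simp add: field_simps power2_eq_square power3_eq_cube)
  have tt: "\<bar>t^2 - 1\<bar> \<le> 3*e"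
  proof -
    have "t^2 - 1 = (t-1)*(t+1)" by (simp add: algebra_simps power2_eq_square)
    hence "\<bar>t^2-1\<bar> = \<bar>t-1\<bar>*\<bar>t+1\<bar>" by (simp add: abs_mult)
    also have "\<dots> \<le> e * 3" using t t1 e0 by (intro mult_mono) auto
    finally show ?thesis by simp
  qed
  have s2: "w^2 \<le> 1" "w^2 \<ge> 0" using w by (auto simp: power_le_one)
  have s3: "w^3 \<le> 1" "w^3 \<ge> 0" using w by (auto simp: power_le_one)
  have b1: "\<bar>w^2*(t^2-1)/2\<bar> \<le> 3*e/2"
  proof -
    have "\<bar>w^2*(t^2-1)\<bar> \<le> 1 * (3*e)" unfolding abs_mult using s2 tt by (intro mult_mono) auto
    thus ?thesis by simp
  qed
  have b2: "\<bar>w*(2-w)*(t-1)\<bar> \<le> 2*e"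
  proof -
    have "w*(2-w) \<le> 1*2" using w by (intro mult_mono) auto
    hence "\<bar>w*(2-w)\<bar> \<le> 2" using w by simp
    hence "\<bar>w*(2-w)*(t-1)\<bar> \<le> 2*e" unfolding abs_mult[of "w*(2-w)"] using t by (intro mult_mono') auto
    thus ?thesis .
  qed
  have "\<bar>(p-F)*(2-w)\<bar> \<le> e*2"
    unfolding abs_mult using p w by (intro mult_mono') auto
  hence b3: "\<bar>(p-F)*(2-w)\<bar> \<le> 2*e" by simp
  have dd38: "\<bar>d\<bar> \<le> 3/8" using m0 unfolding d_def by auto
  have "\<bar>w^3\<bar> \<le> 1" using s3 by simp
  hence "\<bar>d\<bar>*\<bar>w^3\<bar> \<le> 3/8 * 1" using dd38 by (intro mult_mono) auto
  hence "\<bar>d*w^3\<bar> \<le> 3/8" by (simp add: abs_mult)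
  hence "\<bar>d*w^3\<bar>*\<bar>t^2-1\<bar> \<le> (3/8)*(3*e)" using tt by (intro mult_mono) auto
  hence b4: "\<bar>d*w^3*(t^2-1)\<bar> \<le> (3/8)*(3*e)" by (simp add: abs_mult)
  have "\<bar>h - h0\<bar> \<le> 3*e/2 + 2*e + 2*e + (3/8)*(3*e)"
    unfolding hdiff using b1 b2 b3 b4 by linarith
  hence hb: "h \<ge> m/2" using h0b e0 by linarith
  define G where "G = w*t^2/(2*p) - w*t/p + 1"
  have G1: "G \<ge> 1/5"
  proof -
    have Geq: "G = 1 - w*(t/p)*(1 - t/2)" unfolding G_def using ppos by (simp add: field_simps power2_eq_square)
    moreover have "t/p \<le> 3/2"
    proof -
      have "t/p \<le> (1+e)/(F-e)" using t1 p1 tpos e0 F by (intro frac_le) auto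
      moreover have "(1+e)/(F-e) \<le> 3/2" using e0 m0 F by (simp add: field_simps)
      ultimately show ?thesis by linarith
    qed
    moreover have "1 - t/2 \<le> 1/2 + e/2" "1 - t/2 \<ge> 0" using t1 e0 by auto
    moreover have "t/p \<ge> 0" using tpos ppos by simp
    ultimately have "w*(t/p)*(1 - t/2) \<le> 1*(3/2)*(1/2+e/2)"
      using w by (intro mult_mono) auto
    hence "1 - 1*(3/2)*(1/2+e/2) \<le> 1 - w*(t/p)*(1 - t/2)" by (rule diff_left_mono)
    moreover have "1/5 \<le> 1 - 1*(3/2)*(1/2+e/2)" using e0 by simp
    ultimately show ?thesis unfolding Geq by (rule order_trans[rotated])
  qed
  have G2: "G \<le> 4"
  proof -
    have "w*t^2/(2*p) \<le> 3" 
    proof -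
      have "w*t^2 \<le> 1*4" using w t4 t20 by (intro mult_mono) auto
      moreover have "2*p \<ge> 3/2" using p1 e0 m0 by linarith
      ultimately show ?thesis using ppos by (simp add: field_simps)
    qed
    moreover have "w*t/p \<ge> 0" using w tpos ppos by simp
    ultimately show ?thesis unfolding G_def by linarith
  qed
  have EQ: "E = w*X^2 - w^2*t*X*Z + Q*Z^2 + w*G*g" unfolding E_def Q_def G_def by simp
  have key: "E = \<delta>*w*(X - w*t*Z/(2*\<delta>))^2 + (1-\<delta>)*w*X^2 + h*Z^2 + w*G*g"
    unfolding EQ h_def dd using \<delta>0 by (simp add: field_simps power2_eq_square power3_eq_cube)
  define c where "c = m/(8*(F+1))"
  have c01: "c > 0" "c \<le> 1/5" using m0 F unfolding c_def by (auto simp: field_simps)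
  have c02: "c \<le> m/(2+m)" unfolding c_def using m0 F by (intro frac_le) auto
  note c0 = c01(1) c02 c01(2)
  have "p/t \<le> (F+1)/(1/2)" using p1 t1 e0 tpos ppos by (intro frac_le) auto
  hence pt: "p/t \<le> 2*(F+1)" by simp
  have "c*(p/t) \<le> c*(2*(F+1))" using pt c0 by (intro mult_left_mono) auto
  moreover have "c*(2*(F+1)) = m/4" unfolding c_def using F by (simp add: field_simps)
  ultimately have "c*(p/t) \<le> m/2" using m0 by linarith
  have low: "c*I \<le> E"
  proof -
    have "c*I = c*w*X^2 + (c*(p/t))*Z^2 + c*w*g" unfolding I_def by (simp add: algebra_simps)
    also have "\<dots> \<le> (1-\<delta>)*w*X^2 + h*Z^2 + w*G*g"
    proof -
      have "c*w*X^2 \<le> (1-\<delta>)*w*X^2" using c0 \<delta>0 w by (intro mult_right_mono) auto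
      moreover have "(c*(p/t))*Z^2 \<le> h*Z^2"
      proof (rule mult_right_mono)
        show "c*(p/t) \<le> h" using \<open>c*(p/t) \<le> m/2\<close> hb by linarith
      qed simp
      moreover have "c*w*g \<le> w*G*g" using c0 G1 w g by (intro mult_right_mono) auto
      ultimately show ?thesis by linarith
    qed
    also have "\<dots> \<le> E" unfolding key using \<delta>0 w by simp
    finally show ?thesis .
  qed
  have up: "E \<le> (6*F+14)*I"
  proof -
    have cs: "-(w^2*t*X*Z) \<le> w*X^2 + w^3*t^2/4*Z^2"
    proof -
      have "0 \<le> w*(X + w*t*Z/2)^2" using w by simp
      thus ?thesis by (simp add: algebra_simps power2_eq_square power3_eq_cube)
    qed
    have Qb: "Q + w^3*t^2/4 \<le> 2*F + 5"
    proof -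
      have wt2: "w^2*t^2 \<le> 1*4" using s2 t4 t20 by (intro mult_mono) auto
      have wt3: "w^3*t^2 \<le> 1*4" using s3 t4 t20 by (intro mult_mono) auto
      have wt0: "w*t*(2-w) \<ge> 0" using w tpos by simp
      have pw: "p*(2-w) \<le> (F+1)*2" using p1 e0 w ppos by (intro mult_mono) auto
      show ?thesis unfolding Q_def by (rule lin4[OF wt3 wt0 pw wt2])
    qed
    have "(3/4)/2 \<le> p/t" using p1 t1 e0 tpos ppos m0 by (intro frac_le) auto
    hence ptl: "p/t \<ge> 3/8" by simp
    have "E \<le> 2*w*X^2 + (Q + w^3*t^2/4)*Z^2 + w*G*g" unfolding EQ using cs by (simp add: algebra_simps)
    also have "\<dots> \<le> (6*F+14)*w*X^2 + ((6*F+14)*(p/t))*Z^2 + (6*F+14)*w*g"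
    proof -
      have "2*w*X^2 \<le> (6*F+14)*w*X^2" using w F by (intro mult_right_mono) auto
      moreover have "Q + w^3*t^2/4 \<le> (6*F+14)*(p/t)"
      proof -
        have "(6*F+14)*(3/8) \<le> (6*F+14)*(p/t)" using ptl F by (intro mult_left_mono) auto
        thus ?thesis using Qb F lin5[of F "(6*F+14)*(p/t)" "Q + w^3*t^2/4"] by blast
      qed
      hence "(Q + w^3*t^2/4)*Z^2 \<le> ((6*F+14)*(p/t))*Z^2" by (intro mult_right_mono) auto
      moreover have "w*G*g \<le> (6*F+14)*w*g" using G2 w g F by (intro mult_right_mono) auto
      ultimately show ?thesis by linarith
    qed
    also have "\<dots> = (6*F+14)*I" unfolding I_def by (simp add: algebra_simps)
    finally show ?thesis .
  qed
  show ?thesis using low up unfolding c_def by simp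
qed

lemma f_cont0:
  fixes f :: "real \<Rightarrow> real"
  assumes a: "a > 0" and an: "real_analytic_on {0..<a} f" and e: "e > 0"
  shows "\<exists>\<eta>>0. \<forall>R. 0 < R \<and> R < \<eta> \<and> R < a \<longrightarrow> \<bar>f R - f 0\<bar> < e"
proof -
  from an a obtain \<delta> c where \<delta>: "\<delta> > 0"
    and sm: "\<forall>y\<in>{0..<a}. \<bar>y - 0\<bar> < \<delta> \<longrightarrow> (\<lambda>n. c n * (y - 0) ^ n) sums f y"
    unfolding real_analytic_on_def by fastforce
  define \<rho> where "\<rho> = min \<delta> a / 2"
  have \<rho>: "\<rho> > 0" "\<rho> < \<delta>" "\<rho> < a" using \<delta> a unfolding \<rho>_def by auto
  have "(\<lambda>n. c n * \<rho> ^ n) sums f \<rho>" using sm \<rho> by auto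
  hence sum\<rho>: "summable (\<lambda>n. c n * \<rho> ^ n)" by (rule sums_summable)
  define g where "g x = suminf (\<lambda>n. c n * x ^ n)" for x :: real
  have gs: "(\<lambda>n. c n * x ^ n) sums g x" if "norm x < \<rho>" for x
  proof -
    have "summable (\<lambda>n. c n * x ^ n)"
      by (rule powser_inside[OF sum\<rho>]) (use that \<rho> in auto)
    thus ?thesis unfolding g_def by (rule summable_sums)
  qed
  have lim: "(g \<longlongrightarrow> c 0) (at 0)" by (rule powser_limit_0[OF \<rho>(1) gs])
  have c0: "c 0 = f 0" using sm a \<delta> by (auto dest: sums_unique2[OF powser_sums_zero])
  have gf: "g y = f y" if "0 \<le> y" "y < \<rho>" for y
  proof -
    have "(\<lambda>n. c n * y ^ n) sums f y" using sm that \<rho> by auto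
    moreover have "(\<lambda>n. c n * y ^ n) sums g y" using gs that by auto
    ultimately show ?thesis by (rule sums_unique2[symmetric])
  qed
  obtain s where s: "s > 0" "\<forall>x. x \<noteq> 0 \<and> norm (x - 0) < s \<longrightarrow> norm (g x - c 0) < e"
    using LIM_D[OF lim e] by blast
  show ?thesis
  proof (intro exI[of _ "min s \<rho>"] conjI allI impI)
    show "min s \<rho> > 0" using s \<rho> by simp
    fix R assume R: "0 < R \<and> R < min s \<rho> \<and> R < a"
    then have "norm (g R - c 0) < e" using s by auto
    moreover have "g R = f R" using R by (intro gf) auto
    ultimately show "\<bar>f R - f 0\<bar> < e" using c0 by simp
  qed
qed

lemma rs_strict:
  fixes f rs :: "real \<Rightarrow> real"
  assumes a: "a > 0" and f_pos: "\<forall>R\<in>{0..<a}. f R > 0"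
    and rs_deriv: "\<forall>r>1 / a. (rs has_real_derivative 1 / f (1 / r)) (at r)"
    and xy: "1/a < x" "x < y"
  shows "rs x < rs y"
proof -
  have "\<exists>z. x < z \<and> z < y \<and> rs y - rs x = (y - x) * (1 / f (1 / z))"
    by (rule MVT2) (use xy rs_deriv in auto)
  then obtain z where z: "x < z" "z < y" "rs y - rs x = (y - x) * (1 / f (1 / z))" by blast
  have zpos: "z > 0" using z xy a by (smt (verit) divide_pos_pos)
  have "1 / z < a" using z xy a zpos by (simp add: field_simps) (smt (verit) divide_less_eq mult.commute)
  hence "f (1/z) > 0" using f_pos zpos by auto
  hence "(y - x) / f (1/z) > 0" using z by simp
  thus ?thesis using z by simp
qed

lemma inv_less_of: fixes b z :: real assumes "0 < b" "1/b < z" shows "1/z < b" "0 < z"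
proof -
  have z: "0 < z" using assms by (smt (verit) divide_pos_pos)
  have "1 < z*b" using assms by (simp add: divide_less_eq)
  thus "1/z < b" using z by (simp add: divide_less_eq mult.commute)
  show "0 < z" by (rule z)
qed

lemma tri_half: fixes A B C e :: real
  assumes "A = B + C" "\<bar>B\<bar> \<le> e/2" "\<bar>C\<bar> \<le> e/2" shows "\<bar>A\<bar> \<le> e"
proof -
  have "\<bar>A\<bar> \<le> \<bar>B\<bar> + \<bar>C\<bar>" unfolding assms(1) by (rule abs_triangle_ineq)
  thus ?thesis using assms(2,3) by linarith
qed

lemma rs_asymp:
  fixes a :: real and f rs :: "real \<Rightarrow> real"
  assumes a_pos: "a > 0"
    and f_an: "real_analytic_on {0..<a} f"
    and f_pos: "\<forall>R\<in>{0..<a}. f R > 0"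
    and rs_deriv: "\<forall>r>1 / a. (rs has_real_derivative 1 / f (1 / r)) (at r)"
    and f0: "f 0 > 3 / 4" and e: "0 < e" "e \<le> 1/20"
  shows "\<exists>r0. r0 > 1/a \<and> (\<forall>r\<ge>r0. \<bar>f (1/r) - f 0\<bar> \<le> e \<and> \<bar>rs r * f (1/r) / r - 1\<bar> \<le> e)"
proof -
  define F where "F = f 0"
  define e1 where "e1 = e/8"
  have e1: "e1 > 0" "e1 \<le> 1/160" using e unfolding e1_def by auto
  obtain \<eta> where \<eta>: "\<eta> > 0" "\<forall>R. 0 < R \<and> R < \<eta> \<and> R < a \<longrightarrow> \<bar>f R - F\<bar> < e1"
    using f_cont0[OF a_pos f_an e1(1)] unfolding F_def by blast
  define r1 where "r1 = max (1/a) (1/\<eta>) + 1"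
  have r1: "r1 > 1/a" "r1 > 1/\<eta>" unfolding r1_def by auto
  have fz: "\<bar>f (1/z) - F\<bar> < e1" if "z \<ge> r1" for z
  proof -
    have "1/z < \<eta>" "0 < z" using inv_less_of[OF \<eta>(1), of z] that r1 by auto
    moreover have "1/z < a" using inv_less_of[OF a_pos, of z] that r1 by auto
    ultimately show ?thesis using \<eta>(2) by auto
  qed
  have r1pos: "r1 > 0" using inv_less_of[OF a_pos, of r1] r1 by auto
  define K where "K = 2*r1 + \<bar>rs r1\<bar>*(F+1)"
  have K0: "K \<ge> 0" unfolding K_def using r1pos f0 F_def by simp
  define r0 where "r0 = r1 + 1 + 2*K/e"
  have "2*K/e \<ge> 0" using K0 e by simp
  hence r0: "r0 > r1" unfolding r0_def by linarith
  show ?thesis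
  proof (intro exI[of _ r0] conjI allI impI)
    show "r0 > 1/a" using r0 r1 by simp
    fix r assume rr: "r \<ge> r0"
    have rr1: "r > r1" using rr r0 by simp
    have rpos: "r > 0" using rr1 r1pos by simp
    define \<phi> where "\<phi> = f (1/r)"
    have \<phi>: "\<bar>\<phi> - F\<bar> < e1" unfolding \<phi>_def using fz rr1 by simp
    thus "\<bar>f (1/r) - f 0\<bar> \<le> e" unfolding \<phi>_def F_def e1_def using e by simp
    have "\<exists>z. r1 < z \<and> z < r \<and> rs r - rs r1 = (r - r1) * (1 / f (1 / z))"
      by (rule MVT2) (use rr1 r1 rs_deriv in auto)
    then obtain z where z: "r1 < z" "z < r" "rs r - rs r1 = (r - r1) * (1 / f (1 / z))" by blast
    define \<psi> where "\<psi> = f (1/z)"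
    have \<psi>: "\<bar>\<psi> - F\<bar> < e1" unfolding \<psi>_def using fz z by simp
    have \<psi>pos: "\<psi> \<ge> 1/2" "\<phi> \<ge> 1/2" using \<psi> \<phi> e1 f0 F_def by auto
    have rsr: "rs r = rs r1 + (r - r1)/\<psi>" using z unfolding \<psi>_def by simp
    have split: "rs r * \<phi> / r - 1 = (\<phi>/\<psi> - 1) + (rs r1 * \<phi> - r1 * (\<phi>/\<psi>))/r"
      unfolding rsr using rpos \<psi>pos by (simp add: field_simps)
    have A: "\<bar>\<phi>/\<psi> - 1\<bar> \<le> e/2"
    proof -
      have "\<phi>/\<psi> - 1 = (\<phi> - \<psi>) / \<psi>" using \<psi>pos by (simp add: field_simps)
      hence "\<bar>\<phi>/\<psi> - 1\<bar> = \<bar>\<phi> - \<psi>\<bar> / \<psi>" using \<psi>pos by simp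
      also have "\<dots> \<le> (2*e1) / (1/2)" using \<phi> \<psi> \<psi>pos by (intro frac_le) auto
      finally show ?thesis unfolding e1_def by simp
    qed
    have ratio1: "0 \<le> \<phi>/\<psi>" using \<psi>pos by auto
    have "\<phi>/\<psi> - 1 \<le> e/2" using A by linarith
    hence ratio2: "\<phi>/\<psi> \<le> 2" using e by linarith
    note ratio = ratio1 ratio2
    have B: "\<bar>rs r1 * \<phi> - r1 * (\<phi>/\<psi>)\<bar> \<le> K"
    proof -
      have "\<bar>rs r1 * \<phi>\<bar> \<le> \<bar>rs r1\<bar> * (F+1)" unfolding abs_mult
        using \<phi> e1 \<psi>pos by (intro mult_left_mono) auto
      moreover have "\<bar>r1 * (\<phi>/\<psi>)\<bar> \<le> r1 * 2"
      proof -
        have "\<bar>r1 * (\<phi>/\<psi>)\<bar> = r1 * (\<phi>/\<psi>)"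
          by (intro abs_of_nonneg mult_nonneg_nonneg) (use ratio r1pos in auto)
        also have "\<dots> \<le> r1 * 2" using ratio r1pos by (intro mult_left_mono) auto
        finally show ?thesis .
      qed
      ultimately show ?thesis unfolding K_def by linarith
    qed
    have C: "\<bar>(rs r1 * \<phi> - r1 * (\<phi>/\<psi>))/r\<bar> \<le> e/2"
    proof -
      have "\<bar>(rs r1 * \<phi> - r1 * (\<phi>/\<psi>))/r\<bar> = \<bar>rs r1 * \<phi> - r1 * (\<phi>/\<psi>)\<bar> / r" using rpos by simp
      also have "\<dots> \<le> K / r" using B rpos by (intro divide_right_mono) auto
      also have "\<dots> \<le> e/2"
      proof -
        have "2*K/e \<le> r" using rr r1pos unfolding r0_def by linarith
        hence "2*K \<le> r*e" using e by (simp add: field_simps)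
        thus ?thesis using rpos e by (simp add: field_simps)
      qed
      finally show ?thesis .
    qed
    show "\<bar>rs r * f (1/r) / r - 1\<bar> \<le> e"
      using tri_half[OF split A C] unfolding \<phi>_def[symmetric] .
  qed
qed

lemma integral_compare:
  fixes Ii Ei :: "real \<times> real \<times> real \<Rightarrow> real" and c C :: real
  assumes pw: "\<forall>p\<in>D. 0 \<le> Ii p \<and> c * Ii p \<le> Ei p \<and> Ei p \<le> C * Ii p"
    and c: "0 < c" "c \<le> C"
  shows "ereal c * enn2ereal (\<integral>\<^sup>+ p \<in> D. ennreal (Ii p) \<partial>lborel) \<le> ext_integral D Ei \<and>
         ext_integral D Ei \<le> ereal C * enn2ereal (\<integral>\<^sup>+ p \<in> D. ennreal (Ii p) \<partial>lborel)"
proof -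
  define NI where "NI = (\<integral>\<^sup>+ p \<in> D. ennreal (Ii p) \<partial>lborel)"
  define NE where "NE = (\<integral>\<^sup>+ p \<in> D. ennreal (Ei p) \<partial>lborel)"
  have neg0: "(\<integral>\<^sup>+ p \<in> D. ennreal (- Ei p) \<partial>lborel) = 0"
  proof -
    have "(\<integral>\<^sup>+ p \<in> D. ennreal (- Ei p) \<partial>lborel) = (\<integral>\<^sup>+ p. 0 \<partial>(lborel :: (real \<times> real \<times> real) measure))"
    proof (rule nn_integral_cong)
      fix x
      show "ennreal (- Ei x) * indicator D x = 0"
      proof (cases "x \<in> D")
        case True
        then have "0 \<le> c * Ii x" "c * Ii x \<le> Ei x" using pw c by auto
        then have "- Ei x \<le> 0" by linarith
        then show ?thesis by (simp add: ennreal_neg)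
      qed simp
    qed
    thus ?thesis by simp
  qed
  have ext: "ext_integral D Ei = enn2ereal NE"
    unfolding ext_integral_def NE_def neg0 by (simp add: zero_ennreal.rep_eq)
  have Cpos: "C > 0" using c by simp
  have low: "ennreal c * NI \<le> NE"
  proof -
    have "ennreal c * NI \<le> (\<integral>\<^sup>+ p. ennreal c * (ennreal (Ii p) * indicator D p) \<partial>lborel)"
      unfolding NI_def by (rule nn_cmult_le)
    also have "\<dots> \<le> NE" unfolding NE_def
    proof (rule nn_integral_mono)
      fix x
      show "ennreal c * (ennreal (Ii x) * indicator D x) \<le> ennreal (Ei x) * indicator D x"
      proof (cases "x \<in> D")
        case True
        then have h: "0 \<le> Ii x" "c * Ii x \<le> Ei x" using pw by auto
        have "ennreal c * ennreal (Ii x) = ennreal (c * Ii x)" using c h by (simp add: ennreal_mult)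
        also have "\<dots> \<le> ennreal (Ei x)" by (rule ennreal_leI[OF h(2)])
        finally show ?thesis using True by simp
      qed simp
    qed
    finally show ?thesis .
  qed
  have up: "NE \<le> ennreal C * NI"
  proof -
    have "NE \<le> (\<integral>\<^sup>+ p. ennreal C * (ennreal (Ii p) * indicator D p) \<partial>lborel)" unfolding NE_def
    proof (rule nn_integral_mono)
      fix x
      show "ennreal (Ei x) * indicator D x \<le> ennreal C * (ennreal (Ii x) * indicator D x)"
      proof (cases "x \<in> D")
        case True
        then have h: "0 \<le> Ii x" "Ei x \<le> C * Ii x" using pw by auto
        have "ennreal (Ei x) \<le> ennreal (C * Ii x)" by (rule ennreal_leI[OF h(2)])
        also have "\<dots> = ennreal C * ennreal (Ii x)" using Cpos h by (simp add: ennreal_mult)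
        finally show ?thesis using True by simp
      qed simp
    qed
    also have "\<dots> \<le> ennreal C * NI"
    proof -
      let ?J = "(\<integral>\<^sup>+ p. ennreal C * (ennreal (Ii p) * indicator D p) \<partial>lborel)"
      have "ennreal (1/C) * ?J \<le> (\<integral>\<^sup>+ p. ennreal (1/C) * (ennreal C * (ennreal (Ii p) * indicator D p)) \<partial>lborel)"
        by (rule nn_cmult_le)
      also have "\<dots> = NI" unfolding NI_def
      proof (rule nn_integral_cong)
        fix x
        have "ennreal (1/C) * ennreal C = 1" using Cpos by (simp add: ennreal_mult[symmetric])
        thus "ennreal (1/C) * (ennreal C * (ennreal (Ii x) * indicator D x)) = ennreal (Ii x) * indicator D x"
          by (simp add: mult.assoc[symmetric])
      qed
      finally have *: "ennreal (1/C) * ?J \<le> NI" .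
      have "?J = ennreal C * (ennreal (1/C) * ?J)"
      proof -
        have "ennreal C * ennreal (1/C) = 1" using Cpos by (simp add: ennreal_mult[symmetric])
        thus ?thesis by (simp add: mult.assoc[symmetric])
      qed
      also have "\<dots> \<le> ennreal C * NI" using * by (rule mult_left_mono) simp
      finally show ?thesis .
    qed
    finally show ?thesis .
  qed
  have "ereal c * enn2ereal NI = enn2ereal (ennreal c * NI)"
    using c by (simp add: times_ennreal.rep_eq)
  also have "\<dots> \<le> enn2ereal NE" using low by (simp add: less_eq_ennreal.rep_eq)
  finally have L: "ereal c * enn2ereal NI \<le> ext_integral D Ei" unfolding ext .
  have "enn2ereal NE \<le> enn2ereal (ennreal C * NI)" using up by (simp add: less_eq_ennreal.rep_eq)
  also have "\<dots> = ereal C * enn2ereal NI" using Cpos by (simp add: times_ennreal.rep_eq)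
  finally have U: "ext_integral D Ei \<le> ereal C * enn2ereal NI" unfolding ext .
  show ?thesis using L U unfolding NI_def by simp
qed

lemma bridge:
  fixes w u R p t A B g :: real and f :: "real \<Rightarrow> real"
  assumes w: "w > 0" and u: "u < 0" and R: "R > 0" and p: "p > 0" and t: "t > 0"
    and fR: "f R = p" and uR: "u * R = -(w*t/p)"
  shows "w * energy_density f w u R A B g = w*(u*A)^2 - w^2*t*(u*A)*(R*B)
           + (w^2*t^2/2 - w*t*(2-w) + p*(2-w))*(R*B)^2 + w*(w*t^2/(2*p) - w*t/p + 1)*g"
    and "w * (u^2 * A^2 + R / \<bar>u\<bar> * B^2 + g) = w*(u*A)^2 + (p/t)*(R*B)^2 + w*g"
proof -
  have ueq: "u = -(w*t)/(p*R)" using uR R p by (simp add: field_simps)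
  have "\<bar>u\<bar> = -u" using u by simp
  also have "-u = (w*t)/(p*R)" by (simp add: ueq)
  finally have au: "\<bar>u\<bar> = (w*t)/(p*R)" .
  show "w * energy_density f w u R A B g = w*(u*A)^2 - w^2*t*(u*A)*(R*B)
           + (w^2*t^2/2 - w*t*(2-w) + p*(2-w))*(R*B)^2 + w*(w*t^2/(2*p) - w*t/p + 1)*g"
    unfolding energy_density_def fR using w R p t
    by (simp add: ueq field_simps power2_eq_square power3_eq_cube power4_eq_xxxx)
  show "w * (u^2 * A^2 + R / \<bar>u\<bar> * B^2 + g) = w*(u*A)^2 + (p/t)*(R*B)^2 + w*g"
    unfolding au using w R p t by (simp add: field_simps power2_eq_square)
qed

lemma R_on_H_prop:
  fixes a :: real and f rs :: "real \<Rightarrow> real"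
  assumes a_pos: "a > 0"
    and f_pos: "\<forall>R\<in>{0..<a}. f R > 0"
    and rs_deriv: "\<forall>r>1 / a. (rs has_real_derivative 1 / f (1 / r)) (at r)"
    and f0: "f 0 > 3 / 4" and e: "0 < e" "e \<le> 1/20"
    and r0: "r0 > 1/a" and hr0: "\<forall>r\<ge>r0. \<bar>f (1/r) - f 0\<bar> \<le> e \<and> \<bar>rs r * f (1/r) / r - 1\<bar> \<le> e"
    and w: "0 < w" "w \<le> 1" and u: "u < -\<bar>rs r0\<bar> - 1"
  shows "\<exists>r\<ge>r0. rs r = -u/w \<and> R_on_H a rs w u = 1/r"
proof -
  define F where "F = f 0"
  define yv where "yv = -u/w"
  have upos: "-u > 0" using u by simp
  have "-u \<le> -u/w" using w upos by (simp add: field_simps)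
  hence v1: "yv > rs r0" "yv > 0" using u upos unfolding yv_def by auto
  have r0pos: "r0 > 0" using inv_less_of[OF a_pos r0] by simp
  have lowb: "rs r \<ge> r / (2*(F+1))" if rr: "r \<ge> r0" for r
  proof -
    have rpos: "r > 0" using rr r0pos by simp
    define q where "q = f (1/r)"
    have q: "\<bar>q - F\<bar> \<le> e" "\<bar>rs r * q / r - 1\<bar> \<le> e" using hr0 rr unfolding q_def F_def by auto
    have qb: "q > 0" "q \<le> F + 1" using q e f0 F_def by auto
    have "rs r * q / r \<ge> 1/2" using q e by linarith
    hence h: "rs r * q \<ge> r/2" using rpos by (simp add: field_simps)
    hence "0 < rs r * q" using rpos by linarith
    hence "rs r > 0" using qb by (simp add: zero_less_mult_iff)
    hence "rs r * q \<le> rs r * (F+1)" using qb by (intro mult_left_mono) auto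
    hence "r/2 \<le> rs r * (F+1)" using h by linarith
    thus ?thesis using f0 F_def by (simp add: field_simps)
  qed
  define rb where "rb = r0 + 4*(F+1)* yv"
  have Fp: "F + 1 > 0" using f0 F_def by simp
  have rb: "rb \<ge> r0" unfolding rb_def using Fp v1 by simp
  have "rs rb \<ge> rb / (2*(F+1))" by (rule lowb[OF rb])
  moreover have "rb / (2*(F+1)) \<ge> yv"
  proof -
    have "rb \<ge> 4*(F+1)* yv" unfolding rb_def using r0pos by simp
    moreover have "4*(F+1)* yv \<ge> 2*(F+1)* yv" using Fp v1 by simp
    ultimately have "rb \<ge> yv * (2*(F+1))" by (simp add: algebra_simps)
    thus ?thesis using Fp by (simp add: field_simps)
  qed
  ultimately have vb: "yv \<le> rs rb" by linarith
  have "\<exists>x. r0 \<le> x \<and> x \<le> rb \<and> rs x = yv"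
  proof (rule IVT)
    show "rs r0 \<le> yv" using v1 by simp
    show "yv \<le> rs rb" by (rule vb)
    show "r0 \<le> rb" by (rule rb)
    show "\<forall>x. r0 \<le> x \<and> x \<le> rb \<longrightarrow> isCont rs x"
    proof (intro allI impI)
      fix x assume "r0 \<le> x \<and> x \<le> rb"
      hence "x > 1/a" using r0 by linarith
      thus "isCont rs x" using rs_deriv by (intro DERIV_isCont) auto
    qed
  qed
  then obtain r where r: "r0 \<le> r" "rs r = yv" by blast
  have rpos: "r > 0" "1/a < r" using r r0pos r0 by auto
  have inj: "R' = 1/r" if R': "0 < R'" "R' < a" "u = - w * rs (1 / R')" for R'
  proof -
    have "rs (1/R') = yv" using R' w unfolding yv_def by (simp add: field_simps)
    have ia: "1/a < 1/R'" using R' by (simp add: frac_less2)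
    have "1/R' = r"
    proof (rule ccontr)
      assume ne: "1/R' \<noteq> r"
      show False
      proof (cases "1/R' < r")
        case True
        have "rs (1/R') < rs r" by (rule rs_strict[OF a_pos f_pos rs_deriv ia True])
        thus False using \<open>rs (1/R') = yv\<close> r by simp
      next
        case False
        hence "r < 1/R'" using ne by simp
        have "rs r < rs (1/R')" by (rule rs_strict[OF a_pos f_pos rs_deriv rpos(2) \<open>r < 1/R'\<close>])
        thus False using \<open>rs (1/R') = yv\<close> r by simp
      qed
    qed
    hence "1/(1/R') = 1/r" by simp
    thus ?thesis by simp
  qed
  have "R_on_H a rs w u = 1/r"
    unfolding R_on_H_def using w
  proof (simp, intro the_equality)
    show "0 < 1/r \<and> 1/r < a \<and> u = - (w * rs (1 / (1/r)))"
      using rpos inv_less_of[OF a_pos rpos(2)] r w unfolding yv_def by auto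
    fix R' assume "0 < R' \<and> R' < a \<and> u = - (w * rs (1 / R'))"
    thus "R' = 1/r" using inj by auto
  qed
  thus ?thesis using r unfolding yv_def by auto
qed

lemma dens_compare:
  fixes a A B :: real and f rs :: "real \<Rightarrow> real"
  assumes a_pos: "a > 0"
    and f_pos: "\<forall>R\<in>{0..<a}. f R > 0"
    and rs_deriv: "\<forall>r>1 / a. (rs has_real_derivative 1 / f (1 / r)) (at r)"
    and f0: "f 0 > 3 / 4"
    and m: "m = min (f 0 - 3/4) 1" and e: "e = m/20"
    and r0: "r0 > 1/a" and hr0: "\<forall>r\<ge>r0. \<bar>f (1/r) - f 0\<bar> \<le> e \<and> \<bar>rs r * f (1/r) / r - 1\<bar> \<le> e"
    and s: "s \<in> {0..1}" and u: "u < -\<bar>rs r0\<bar> - 1" and g: "g \<ge> 0"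
  defines "R \<equiv> R_on_H a rs s u"
  defines "Idn \<equiv> u^2 * A^2 + R / \<bar>u\<bar> * B^2 + g"
  shows "0 \<le> Idn \<and> (m/(8*(f 0+1))) * Idn \<le> energy_density f s u R A B g
         \<and> energy_density f s u R A B g \<le> (6 * f 0 + 14) * Idn"
proof -
  define F where "F = f 0"
  have m0: "m > 0" "m \<le> 1" using m f0 by auto
  have e0: "0 < e" "e \<le> 1/20" using m0 e by auto
  have Fp: "F + 1 > 0" using f0 F_def by simp
  have c1: "m/(8*(F+1)) \<le> 1"
  proof -
    have "m/(8*(F+1)) \<le> 1/1" using m0 Fp f0 F_def by (intro frac_le) auto
    thus ?thesis by simp
  qed
  have C1: "6*F + 14 \<ge> 1" using f0 F_def by simp
  have c0: "m/(8*(F+1)) > 0" using m0 Fp by simp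
  show ?thesis
  proof (cases "s = 0")
    case True
    have R0: "R = 0" unfolding R_def R_on_H_def using True by simp
    have ED: "energy_density f s u R A B g = Idn"
      unfolding energy_density_def Idn_def R0 using True by simp
    have Id0: "Idn \<ge> 0" unfolding Idn_def R0 using g by simp
    have "(m/(8*(F+1))) * Idn \<le> 1 * Idn" using c1 Id0 by (intro mult_right_mono) auto
    moreover have "1 * Idn \<le> (6*F+14) * Idn" using C1 Id0 by (intro mult_right_mono) auto
    ultimately show ?thesis using Id0 unfolding ED F_def by simp
  next
    case False
    hence w: "0 < s" "s \<le> 1" using s by auto
    obtain r where r: "r \<ge> r0" "rs r = -u/s" "R_on_H a rs s u = 1/r"
      using R_on_H_prop[OF a_pos f_pos rs_deriv f0 e0 r0 hr0 w u] by blast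
    have r0pos: "r0 > 0" using inv_less_of[OF a_pos r0] by simp
    have rpos: "r > 0" using r r0pos by simp
    have Rr: "R = 1/r" unfolding R_def using r by simp
    have Rpos: "R > 0" using Rr rpos by simp
    have Ra: "R < a" using Rr inv_less_of[OF a_pos, of r] r r0 by simp
    define p where "p = f R"
    define t where "t = rs r * p / r"
    have pt: "\<bar>p - F\<bar> \<le> e" "\<bar>t - 1\<bar> \<le> e" using hr0 r unfolding p_def t_def F_def Rr by auto
    have ppos: "p > 0" unfolding p_def using f_pos Rpos Ra by auto
    have tpos: "t > 0" using pt e0 by auto
    have u0: "u < 0" using u by simp
    have ueq: "u = - s * rs r" using r w by (simp add: field_simps)
    have uR: "u * R = -(s*t/p)" unfolding ueq Rr t_def using ppos rpos by (simp add: field_simps)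
    note br = bridge[where f=f and A=A and B=B and g=g, OF w(1) u0 Rpos ppos tpos p_def[symmetric] uR]
    have al: "(m/(8*(F+1))) * (s*(u*A)^2 + (p/t)*(R*B)^2 + s*g) \<le>
       s*(u*A)^2 - s^2*t*(u*A)*(R*B) + (s^2*t^2/2 - s*t*(2-s) + p*(2-s))*(R*B)^2
         + s*(s*t^2/(2*p) - s*t/p + 1)*g \<and>
       s*(u*A)^2 - s^2*t*(u*A)*(R*B) + (s^2*t^2/2 - s*t*(2-s) + p*(2-s))*(R*B)^2
         + s*(s*t^2/(2*p) - s*t/p + 1)*g \<le> (6*F+14) * (s*(u*A)^2 + (p/t)*(R*B)^2 + s*g)"
      by (rule alg_main) (use f0 F_def m e w pt g in auto)
    have br2: "s * Idn = s*(u*A)^2 + (p/t)*(R*B)^2 + s*g" unfolding Idn_def by (rule br(2))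
    define ED where "ED = energy_density f s u R A B g"
    have al2: "(m/(8*(F+1))) * (s * Idn) \<le> s * ED \<and> s * ED \<le> (6*F+14) * (s * Idn)"
      using al unfolding br2[symmetric] br(1)[symmetric] ED_def .
    have lo: "s * ((m/(8*(F+1))) * Idn) \<le> s * ED"
      using al2 by (simp only: mult.left_commute)
    have hi: "s * ED \<le> s * ((6*F+14) * Idn)"
      using al2 by (simp only: mult.left_commute)
    have Id0: "Idn \<ge> 0" unfolding Idn_def using Rpos g by simp
    have "(m/(8*(F+1))) * Idn \<le> ED" using mult_left_le_imp_le[OF lo w(1)] .
    moreover have "ED \<le> (6*F+14) * Idn" using mult_left_le_imp_le[OF hi w(1)] .
    ultimately show ?thesis using Id0 unfolding ED_def F_def by simp
  qed
qed

theorem proposition2: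
  fixes a :: real and f rs :: "real \<Rightarrow> real"
  assumes a_pos: "a > 0"
    and f_an: "real_analytic_on {0..<a} f"
    and f_pos: "\<forall>R\<in>{0..<a}. f R > 0"
    and rs_deriv: "\<forall>r>1 / a. (rs has_real_derivative 1 / f (1 / r)) (at r)"
    and f0: "f 0 > 3 / 4"
  shows "\<exists>U<0. \<exists>c C. 0 < c \<and> c \<le> C \<and>
     (\<forall>u0<U. \<forall>s\<in>{0..1}. \<forall>\<phi> :: point \<Rightarrow> real.
        (\<exists>S. open S \<and> Omega_closure a rs u0 \<subseteq> S \<and> smooth_on S \<phi>) \<longrightarrow>
          ereal c * I_norm a rs s u0 \<phi> \<le> energy_flux a f rs s u0 \<phi> \<and>
          energy_flux a f rs s u0 \<phi> \<le> ereal C * I_norm a rs s u0 \<phi>)"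
proof -
  define F where "F = f 0"
  define m where "m = min (f 0 - 3/4) 1"
  define e where "e = m/20"
  have m0: "m > 0" "m \<le> 1" using m_def f0 by auto
  have e0: "0 < e" "e \<le> 1/20" using m0 e_def by auto
  obtain r0 where r0: "r0 > 1/a" and hr0: "\<forall>r\<ge>r0. \<bar>f (1/r) - f 0\<bar> \<le> e \<and> \<bar>rs r * f (1/r) / r - 1\<bar> \<le> e"
    using rs_asymp[OF a_pos f_an f_pos rs_deriv f0 e0] by blast
  define c where "c = m/(8*(f 0+1))"
  define C where "C = 6 * f 0 + 14"
  have Fp: "f 0 + 1 > 0" using f0 by simp
  have c0: "c > 0" unfolding c_def using m0 Fp by simp
  have c1: "c \<le> 1"
  proof -
    have "m/(8*(f 0+1)) \<le> 1/1" using m0 Fp f0 by (intro frac_le) auto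
    thus ?thesis unfolding c_def by simp
  qed
  have cC: "c \<le> C" using c1 f0 unfolding C_def by simp
  have main: "\<forall>u0 < -\<bar>rs r0\<bar> - 1. \<forall>s\<in>{0..1}. \<forall>\<phi> :: point \<Rightarrow> real.
        (\<exists>S. open S \<and> Omega_closure a rs u0 \<subseteq> S \<and> smooth_on S \<phi>) \<longrightarrow>
          ereal c * I_norm a rs s u0 \<phi> \<le> energy_flux a f rs s u0 \<phi> \<and>
          energy_flux a f rs s u0 \<phi> \<le> ereal C * I_norm a rs s u0 \<phi>"
    proof (intro allI impI ballI)
    fix u0 s :: real and \<phi> :: "point \<Rightarrow> real"
    assume u0: "u0 < -\<bar>rs r0\<bar> - 1" and s: "s \<in> {0..1}"
    have pw: "\<forall>q\<in>param_dom u0. 0 \<le> I_integrand a rs s \<phi> q \<and>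
                c * I_integrand a rs s \<phi> q \<le> E_integrand a f rs s \<phi> q \<and>
                E_integrand a f rs s \<phi> q \<le> C * I_integrand a rs s \<phi> q"
    proof
      fix q assume q: "q \<in> param_dom u0"
      obtain u \<theta> \<psi> where qq: "q = (u, \<theta>, \<psi>)" by (cases q) auto
      have uu: "u < -\<bar>rs r0\<bar> - 1" and th: "0 < \<theta>" "\<theta> < pi"
        using q u0 unfolding qq param_dom_def by auto
      have sn: "sin \<theta> > 0" using th by (rule sin_gt_zero)
      define R where "R = R_on_H a rs s u"
      define x where "x = sph \<theta> \<psi>"
      define A where "A = d_u \<phi> u R x"
      define B where "B = d_R \<phi> u R x"
      define g where "g = grad_S2_sq \<phi> u R \<theta> \<psi>"
      have g0: "g \<ge> 0" unfolding g_def grad_S2_sq_def by simp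
      have EI: "E_integrand a f rs s \<phi> q = energy_density f s u R A B g * sin \<theta>"
        unfolding E_integrand_def qq Let_def R_def x_def A_def B_def g_def by simp
      have II: "I_integrand a rs s \<phi> q = (u^2 * A^2 + R / \<bar>u\<bar> * B^2 + g) * sin \<theta>"
        unfolding I_integrand_def qq Let_def R_def x_def A_def B_def g_def by (simp add: power_mult_distrib)
      have dc: "0 \<le> u^2 * A^2 + R / \<bar>u\<bar> * B^2 + g \<and>
          (m/(8*(f 0+1))) * (u^2 * A^2 + R / \<bar>u\<bar> * B^2 + g) \<le> energy_density f s u R A B g
         \<and> energy_density f s u R A B g \<le> (6 * f 0 + 14) * (u^2 * A^2 + R / \<bar>u\<bar> * B^2 + g)"
        unfolding R_def
        by (rule dens_compare[OF a_pos f_pos rs_deriv f0 m_def e_def r0 hr0 s uu g0])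
      show "0 \<le> I_integrand a rs s \<phi> q \<and>
                c * I_integrand a rs s \<phi> q \<le> E_integrand a f rs s \<phi> q \<and>
                E_integrand a f rs s \<phi> q \<le> C * I_integrand a rs s \<phi> q"
      proof -
        let ?X = "u^2 * A^2 + R / \<bar>u\<bar> * B^2 + g"
        let ?ED = "energy_density f s u R A B g"
        have d1: "c * ?X \<le> ?ED" "?ED \<le> C * ?X" "0 \<le> ?X" using dc unfolding c_def C_def by auto
        have "(c * ?X) * sin \<theta> \<le> ?ED * sin \<theta>" using d1(1) sn by (intro mult_right_mono) auto
        hence l: "c * (?X * sin \<theta>) \<le> ?ED * sin \<theta>" by (simp only: mult.assoc)
        have "?ED * sin \<theta> \<le> (C * ?X) * sin \<theta>" using d1(2) sn by (intro mult_right_mono) auto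
        hence h: "?ED * sin \<theta> \<le> C * (?X * sin \<theta>)" by (simp only: mult.assoc)
        have z: "0 \<le> ?X * sin \<theta>" using d1(3) sn by simp
        show ?thesis unfolding EI II using l h z by blast
      qed
    qed
    show "ereal c * I_norm a rs s u0 \<phi> \<le> energy_flux a f rs s u0 \<phi> \<and>
          energy_flux a f rs s u0 \<phi> \<le> ereal C * I_norm a rs s u0 \<phi>"
      using integral_compare[OF pw c0 cC] unfolding energy_flux_def I_norm_def .
    qed
  show ?thesis
    apply (rule exI[of _ "-\<bar>rs r0\<bar> - 1"])
    apply (rule conjI, simp)
    apply (rule exI[of _ c], rule exI[of _ C])
    using c0 cC main by blast
qed

end
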